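(* In the construction described in the context, $H_i\subseteq H_{i+1}$ for every $i=0,\dots,\ell-1$.
   Context: **Setting.** Let $G=(V,E)$ be an undirected graph (parallel edges allowed, no self-loops) with $n$ vertices and $m$ edges $E=\{e_1,\dots,e_m\}$. Fix integers $c\ge1$, $\delta>c$, $\ell\ge1$ and a real $p\in(0,1)$, and let $s=\lceil pm\rceil$. For graphs on the same vertex set, $\cup$ and $\cap$ act on edge sets, and $\subseteq$ means subgraph. For $C\subseteq V$ and a graph $F$ on $V$, $\partial_F(C)$ is the set of edges of $F$ with exactly one endpoint in $C$. A graph is $c$-edge-connected if it has no cut of size $<c$, and $c$-edge-connected components are maximal induced $c$-edge-connected subgraphs. **Sampling.** For $i=1,\dots,\ell$, let $r_i:\{1,\dots,s\}\to\{1,\dots,m\}$ be a pairwise independent random function: each value is uniform and any two values are independent. The functions $r_1,\dots,r_\ell$ are mutually independent. Set $H_0^0=(V,\emptyset)$ and $H_i^0=H_{i-1}^0\cup(V,\{e_{r_i(1)},\dots,e_{r_i(s)}\})$. **Levels.** Set $G_{-1}=G$. For $i=0,\dots,\ell$, define $H_i$ and $G_i$ as follows. - $H_i$ is the subgraph of $H_i^0\cap G_{i-1}$ consisting of the edges lying inside its $c$-edge-connected components. Equivalently, it is obtained by repeatedly removing all edges lying in cuts of size $<c$. - Start with $G_i:=G_{i-1}$. While some connected component $C$ of $H_i$ satisfies $0<|\partial_{G_i}(C)|<\delta$, delete the edges of $\partial_{G_i}(C)$ from $G_i$ and from $H_i$. *)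

theory Defs
  imports Complex_Main
begin

text \<open>A multigraph on vertex set V with edges indexed 1..m; ends e gives the two
endpoints of edge e. A graph on V is represented by a set of edge indices.\<close>

definition crosses :: "(nat \<Rightarrow> 'v \<times> 'v) \<Rightarrow> 'v set \<Rightarrow> nat \<Rightarrow> bool" where
  "crosses ends C e \<longleftrightarrow> ((fst (ends e) \<in> C) \<noteq> (snd (ends e) \<in> C))"

definition boundary :: "(nat \<Rightarrow> 'v \<times> 'v) \<Rightarrow> nat set \<Rightarrow> 'v set \<Rightarrow> nat set" where
  "boundary ends F C = {e \<in> F. crosses ends C e}"

definition induced :: "(nat \<Rightarrow> 'v \<times> 'v) \<Rightarrow> nat set \<Rightarrow> 'v set \<Rightarrow> nat set" where
  "induced ends F X = {e \<in> F. fst (ends e) \<in> X \<and> snd (ends e) \<in> X}"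

definition edge_connected :: "(nat \<Rightarrow> 'v \<times> 'v) \<Rightarrow> nat \<Rightarrow> nat set \<Rightarrow> 'v set \<Rightarrow> bool" where
  "edge_connected ends k F X \<longleftrightarrow>
     (\<forall>S. S \<subseteq> X \<and> S \<noteq> {} \<and> S \<noteq> X \<longrightarrow> card (boundary ends (induced ends F X) S) \<ge> k)"

definition kecc_component :: "'v set \<Rightarrow> (nat \<Rightarrow> 'v \<times> 'v) \<Rightarrow> nat \<Rightarrow> nat set \<Rightarrow> 'v set \<Rightarrow> bool" where
  "kecc_component V ends k F X \<longleftrightarrow>
     X \<subseteq> V \<and> X \<noteq> {} \<and> edge_connected ends k F X \<and>
     (\<forall>Y. X \<subset> Y \<and> Y \<subseteq> V \<longrightarrow> \<not> edge_connected ends k F Y)"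

definition kecc_edges :: "'v set \<Rightarrow> (nat \<Rightarrow> 'v \<times> 'v) \<Rightarrow> nat \<Rightarrow> nat set \<Rightarrow> nat set" where
  "kecc_edges V ends k F =
     {e \<in> F. \<exists>X. kecc_component V ends k F X \<and> fst (ends e) \<in> X \<and> snd (ends e) \<in> X}"

definition conn_rel :: "'v set \<Rightarrow> (nat \<Rightarrow> 'v \<times> 'v) \<Rightarrow> nat set \<Rightarrow> ('v \<times> 'v) set" where
  "conn_rel V ends F =
     ({(u, v). \<exists>e\<in>F. ends e = (u, v) \<or> ends e = (v, u)})\<^sup>* \<inter> (V \<times> V)"

definition components :: "'v set \<Rightarrow> (nat \<Rightarrow> 'v \<times> 'v) \<Rightarrow> nat set \<Rightarrow> 'v set set" where
  "components V ends F = V // conn_rel V ends F"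

text \<open>One step of the deletion loop on the state (G_i, H_i)\<close>
definition del_step :: "'v set \<Rightarrow> (nat \<Rightarrow> 'v \<times> 'v) \<Rightarrow> nat \<Rightarrow>
    nat set \<times> nat set \<Rightarrow> nat set \<times> nat set \<Rightarrow> bool" where
  "del_step V ends \<delta> st st' \<longleftrightarrow>
     (\<exists>C \<in> components V ends (snd st).
        0 < card (boundary ends (fst st) C) \<and> card (boundary ends (fst st) C) < \<delta> \<and>
        st' = (fst st - boundary ends (fst st) C, snd st - boundary ends (fst st) C))"

definition del_final :: "'v set \<Rightarrow> (nat \<Rightarrow> 'v \<times> 'v) \<Rightarrow> nat \<Rightarrow> nat set \<times> nat set \<Rightarrow> bool" where
  "del_final V ends \<delta> st \<longleftrightarrow> (\<nexists>st'. del_step V ends \<delta> st st')"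

text \<open>H_i^0 = union of the first i samples (edge indices r j k)\<close>
definition sampled :: "(nat \<Rightarrow> nat \<Rightarrow> nat) \<Rightarrow> nat \<Rightarrow> nat \<Rightarrow> nat set" where
  "sampled r s i = (\<Union>j\<in>{1..i}. r j ` {1..s})"

text \<open>Gs i, Hs i (i = 0..l) form a valid execution of the level construction
  (any choice of components in the while loop), with G_{-1} = all edges.\<close>
definition valid_levels :: "'v set \<Rightarrow> (nat \<Rightarrow> 'v \<times> 'v) \<Rightarrow> nat \<Rightarrow> nat \<Rightarrow> nat \<Rightarrow> nat \<Rightarrow> nat \<Rightarrow>
    (nat \<Rightarrow> nat \<Rightarrow> nat) \<Rightarrow> (nat \<Rightarrow> nat set) \<Rightarrow> (nat \<Rightarrow> nat set) \<Rightarrow> bool" where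
  "valid_levels V ends m c \<delta> l s r Gs Hs \<longleftrightarrow>
     (\<forall>i \<le> l.
        (let Gprev = (if i = 0 then {1..m} else Gs (i - 1));
             Hstart = kecc_edges V ends c (sampled r s i \<inter> Gprev)
         in (del_step V ends \<delta>)\<^sup>*\<^sup>* (Gprev, Hstart) (Gs i, Hs i)
            \<and> del_final V ends \<delta> (Gs i, Hs i)))"

end

theory Submission
  imports Defs
begin

lemma comp_no_cross:
  assumes "C \<in> components V ends H" "e \<in> H" "fst (ends e) \<in> V" "snd (ends e) \<in> V"
  shows "\<not> crosses ends C e"
proof -
  let ?R = "{(u, v). \<exists>e\<in>H. ends e = (u, v) \<or> ends e = (v, u)}"
  obtain x where x: "x \<in> V" "C = conn_rel V ends H `` {x}"
    using assms(1) unfolding components_def quotient_def by blast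
  obtain u v where uv: "ends e = (u, v)" by (cases "ends e") auto
  have r1: "(u, v) \<in> ?R" and r2: "(v, u) \<in> ?R" using assms(2) uv by blast+
  have "u \<in> C \<longleftrightarrow> v \<in> C"
  proof
    assume "u \<in> C"
    then have "(x, u) \<in> ?R\<^sup>*" using x unfolding conn_rel_def by blast
    then have "(x, v) \<in> ?R\<^sup>*" using r1 by (meson rtrancl_into_rtrancl)
    then show "v \<in> C" using x assms(4) uv unfolding conn_rel_def by auto
  next
    assume "v \<in> C"
    then have "(x, v) \<in> ?R\<^sup>*" using x unfolding conn_rel_def by blast
    then have "(x, u) \<in> ?R\<^sup>*" using r2 by (meson rtrancl_into_rtrancl)
    then show "u \<in> C" using x assms(3) uv unfolding conn_rel_def by auto
  qed
  then show ?thesis unfolding crosses_def using uv by simp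
qed

lemma steps_inv:
  assumes "(del_step V ends \<delta>)\<^sup>*\<^sup>* st st'"
    and "\<forall>e\<in>snd st. fst (ends e) \<in> V \<and> snd (ends e) \<in> V"
    and "snd st \<subseteq> fst st"
  shows "snd st' = snd st \<and> snd st \<subseteq> fst st'"
  using assms(1)
proof (induction rule: rtranclp_induct)
  case base
  then show ?case using assms by simp
next
  case (step y z)
  then obtain C where C: "C \<in> components V ends (snd y)"
    "z = (fst y - boundary ends (fst y) C, snd y - boundary ends (fst y) C)"
    unfolding del_step_def by blast
  have "boundary ends (fst y) C \<inter> snd y = {}"
    using comp_no_cross[OF C(1)] step.IH assms(2) unfolding boundary_def by auto
  then show ?case using C step.IH by auto
qed

lemma ec_mono:
  assumes "edge_connected ends k F X" "induced ends F X \<subseteq> F'" "finite F'"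
  shows "edge_connected ends k F' X"
  unfolding edge_connected_def
proof (intro allI impI)
  fix S assume S: "S \<subseteq> X \<and> S \<noteq> {} \<and> S \<noteq> X"
  have "k \<le> card (boundary ends (induced ends F X) S)" using assms(1) S
    unfolding edge_connected_def by blast
  also have "\<dots> \<le> card (boundary ends (induced ends F' X) S)"
    apply (rule card_mono)
    using assms(3) apply (simp add: boundary_def induced_def)
    using assms(2) by (auto simp: boundary_def induced_def)
  finally show "k \<le> card (boundary ends (induced ends F' X) S)" .
qed

lemma kecc_mono:
  assumes "finite V" "finite F'" "kecc_edges V ends k F \<subseteq> F'"
  shows "kecc_edges V ends k F \<subseteq> kecc_edges V ends k F'"
proof
  fix e assume e: "e \<in> kecc_edges V ends k F"
  then obtain X where X: "kecc_component V ends k F X" "fst (ends e) \<in> X" "snd (ends e) \<in> X"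
    unfolding kecc_edges_def by blast
  have "induced ends F X \<subseteq> kecc_edges V ends k F"
    using X(1) unfolding induced_def kecc_edges_def by blast
  then have ec: "edge_connected ends k F' X"
    using ec_mono[of ends k F X F'] X(1) assms(2,3) unfolding kecc_component_def by blast
  let ?S = "{Y. X \<subseteq> Y \<and> Y \<subseteq> V \<and> edge_connected ends k F' Y}"
  have ne: "X \<in> ?S" using ec X(1) unfolding kecc_component_def by blast
  have fin: "finite ?S"
    by (rule finite_subset[of _ "Pow V"]) (use assms(1) in auto)
  define n where "n = Max (card ` ?S)"
  have "n \<in> card ` ?S" unfolding n_def using fin ne by (intro Max_in) auto
  then obtain Y where Y1: "Y \<in> ?S" and cY: "card Y = n" by blast
  have Y2: "\<forall>Z\<in>?S. card Z \<le> card Y"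
    unfolding cY n_def using fin by (auto intro: Max_ge)
  note Y = Y1 Y2
  have "kecc_component V ends k F' Y"
    unfolding kecc_component_def
  proof (intro conjI allI impI)
    show "Y \<subseteq> V" using Y by blast
    show "Y \<noteq> {}" using Y X(1) unfolding kecc_component_def by blast
    show "edge_connected ends k F' Y" using Y by blast
    fix Z assume Z: "Y \<subset> Z \<and> Z \<subseteq> V"
    show "\<not> edge_connected ends k F' Z"
    proof
      assume "edge_connected ends k F' Z"
      then have "Z \<in> ?S" using Z Y by blast
      then have "card Z \<le> card Y" using Y by blast
      moreover have "card Y < card Z" using Z assms(1)
        by (meson psubset_card_mono rev_finite_subset)
      ultimately show False by simp
    qed
  qed
  moreover have "e \<in> F'" using e assms(3) by blast
  moreover have "X \<subseteq> Y" using Y(1) by blast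
  ultimately show "e \<in> kecc_edges V ends k F'" using X(2,3) unfolding kecc_edges_def by blast
qed

theorem lemma3:
  fixes V :: "'v set" and ends :: "nat \<Rightarrow> 'v \<times> 'v"
    and m c \<delta> l :: nat and p :: real
    and r :: "nat \<Rightarrow> nat \<Rightarrow> nat" and Gs Hs :: "nat \<Rightarrow> nat set"
  assumes "finite V"
    and "\<forall>e\<in>{1..m}. fst (ends e) \<in> V \<and> snd (ends e) \<in> V \<and> fst (ends e) \<noteq> snd (ends e)"
    and "c \<ge> 1" and "\<delta> > c" and "l \<ge> 1" and "0 < p" and "p < 1"
    and "\<forall>i\<in>{1..l}. \<forall>k\<in>{1..nat \<lceil>p * real m\<rceil>}. r i k \<in> {1..m}"
    and "valid_levels V ends m c \<delta> l (nat \<lceil>p * real m\<rceil>) r Gs Hs"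
  shows "\<forall>i < l. Hs i \<subseteq> Hs (Suc i)"
proof (intro allI impI)
  fix i assume il: "i < l"
  define s where "s = nat \<lceil>p * real m\<rceil>"
  have samp: "sampled r s j \<subseteq> {1..m}" if "j \<le> l" for j
    using assms(8) that unfolding sampled_def s_def by force
  have sfin: "finite (sampled r s j)" for j unfolding sampled_def by auto
  have smono: "sampled r s j \<subseteq> sampled r s (Suc j)" for j unfolding sampled_def by (rule UN_mono) auto
  have lev: "\<And>j. j \<le> l \<Longrightarrow>
     (del_step V ends \<delta>)\<^sup>*\<^sup>* ((if j = 0 then {1..m} else Gs (j - 1)),
        kecc_edges V ends c (sampled r s j \<inter> (if j = 0 then {1..m} else Gs (j - 1)))) (Gs j, Hs j)"
    using assms(9) unfolding valid_levels_def s_def Let_def by blast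
  have inv: "Hs j = kecc_edges V ends c (sampled r s j \<inter> (if j = 0 then {1..m} else Gs (j - 1)))
      \<and> Hs j \<subseteq> Gs j" if j: "j \<le> l" for j
  proof -
    let ?G = "if j = 0 then {1..m} else Gs (j - 1)"
    have sub: "kecc_edges V ends c (sampled r s j \<inter> ?G) \<subseteq> sampled r s j \<inter> ?G"
      unfolding kecc_edges_def by blast
    have a1: "\<forall>e\<in>snd (?G, kecc_edges V ends c (sampled r s j \<inter> ?G)). fst (ends e) \<in> V \<and> snd (ends e) \<in> V"
    proof (unfold snd_conv, intro ballI)
      fix e assume "e \<in> kecc_edges V ends c (sampled r s j \<inter> ?G)"
      then have "e \<in> {1..m}" using sub samp[OF j] by blast
      then show "fst (ends e) \<in> V \<and> snd (ends e) \<in> V" using assms(2) by blast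
    qed
    have a2: "snd (?G, kecc_edges V ends c (sampled r s j \<inter> ?G)) \<subseteq> fst (?G, kecc_edges V ends c (sampled r s j \<inter> ?G))"
      using sub by auto
    show ?thesis
      using steps_inv[OF lev[OF j] a1 a2] by simp
  qed
  let ?Gi = "if i = 0 then {1..m} else Gs (i - 1)"
  have Hi: "Hs i = kecc_edges V ends c (sampled r s i \<inter> ?Gi)" "Hs i \<subseteq> Gs i"
    using inv[of i] il by auto
  have HS: "Hs (Suc i) = kecc_edges V ends c (sampled r s (Suc i) \<inter> Gs i)"
    using inv[of "Suc i"] il by auto
  have "kecc_edges V ends c (sampled r s i \<inter> ?Gi) \<subseteq> sampled r s (Suc i) \<inter> Gs i"
  proof -
    have k1: "kecc_edges V ends c (sampled r s i \<inter> ?Gi) \<subseteq> sampled r s i"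
      unfolding kecc_edges_def by blast
    have k2: "kecc_edges V ends c (sampled r s i \<inter> ?Gi) \<subseteq> Gs i"
      using Hi by simp
    show ?thesis using k1 k2 smono[of i] by blast
  qed
  then show "Hs i \<subseteq> Hs (Suc i)"
    unfolding Hi(1) HS using kecc_mono[OF assms(1)] sfin by blast
qed

end
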